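(* Let $g(x)=1-(1-x^2)^4$ for $|x|\le1$ and $g(x)=1$ otherwise. For $p_o\in]0,\sqrt2[$ let $\mathcal{T}(p_o)$ be the smallest period of the (periodic) function $q$, where $(q,p)$ is the global solution of $\dot q=p$, $\dot p=-g'(q)$ with $(q(0),p(0))=(0,p_o)$. Then: (i) $\mathcal{T}$ is continuous on $]0,\sqrt2[$; (ii) $\mathcal{T}$ is strictly increasing; (iii) $\inf_{p_o\in]0,\sqrt2[}\mathcal{T}(p_o)=\pi/\sqrt2$; (iv) $\lim_{p_o\to\sqrt2}\mathcal{T}(p_o)=+\infty$. *)

theory Defs
  imports "HOL-Analysis.Analysis"
begin

definition g :: "real \<Rightarrow> real" where
  "g x = (if \<bar>x\<bar> \<le> 1 then 1 - (1 - x\<^sup>2) ^ 4 else 1)"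

definition is_solution :: "real \<Rightarrow> (real \<Rightarrow> real) \<Rightarrow> (real \<Rightarrow> real) \<Rightarrow> bool" where
  "is_solution po q p \<longleftrightarrow>
     q 0 = 0 \<and> p 0 = po \<and>
     (\<forall>t. (q has_real_derivative p t) (at t)) \<and>
     (\<forall>t. (p has_real_derivative - deriv g (q t)) (at t))"

definition sol_q :: "real \<Rightarrow> real \<Rightarrow> real" where
  "sol_q po = fst (THE qp. is_solution po (fst qp) (snd qp))"

definition min_period :: "(real \<Rightarrow> real) \<Rightarrow> real" where
  "min_period q = Inf {T. T > 0 \<and> (\<forall>t. q (t + T) = q t)}"

definition period_T :: "real \<Rightarrow> real" where
  "period_T po = min_period (sol_q po)"

end

theory Submission
  imports Defs
begin


lemma deriv_glue:
  fixes f fa fb :: "real \<Rightarrow> real"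
  assumes d1: "(fa has_real_derivative D) (at x)" and d2: "(fb has_real_derivative D) (at x)"
    and e1: "eventually (\<lambda>y. f y = fa y) (at_left x)"
    and e2: "eventually (\<lambda>y. f y = fb y) (at_right x)"
    and v1: "f x = fa x" and v2: "f x = fb x"
  shows "(f has_real_derivative D) (at x)"
proof -
  have l1: "((\<lambda>y. (fa y - fa x) / (y - x)) \<longlongrightarrow> D) (at_left x)"
    using d1 unfolding has_field_derivative_iff filterlim_at_split by blast
  have l2: "((\<lambda>y. (fb y - fb x) / (y - x)) \<longlongrightarrow> D) (at_right x)"
    using d2 unfolding has_field_derivative_iff filterlim_at_split by blast
  have "((\<lambda>y. (f y - f x) / (y - x)) \<longlongrightarrow> D) (at_left x)"
    using l1 by (rule Lim_transform_eventually) (use e1 v1 in \<open>auto elim: eventually_mono\<close>)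
  moreover have "((\<lambda>y. (f y - f x) / (y - x)) \<longlongrightarrow> D) (at_right x)"
    using l2 by (rule Lim_transform_eventually) (use e2 v2 in \<open>auto elim: eventually_mono\<close>)
  ultimately show ?thesis unfolding has_field_derivative_iff filterlim_at_split by blast
qed

definition gp :: "real \<Rightarrow> real" where
  "gp x = (if \<bar>x\<bar> \<le> 1 then 8 * x * (1 - x\<^sup>2) ^ 3 else 0)"

lemma poly_deriv: "((\<lambda>x::real. 1 - (1 - x\<^sup>2) ^ 4) has_real_derivative 8 * x * (1 - x\<^sup>2) ^ 3) (at x)"
  by (auto intro!: derivative_eq_intros simp: power2_eq_square algebra_simps)

lemma g_deriv: "(g has_real_derivative gp x) (at x)"
proof -
  consider "\<bar>x\<bar> < 1" | "\<bar>x\<bar> > 1" | "x = 1" | "x = -1" by linarith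
  then show ?thesis
  proof cases
    case 1
    have ev: "eventually (\<lambda>y. y \<in> {-1<..<1}) (nhds x)"
      using 1 by (intro eventually_nhds_in_open) auto
    show ?thesis
      using 1 poly_deriv[of x]
      by (subst DERIV_cong_ev[OF refl _ refl, where g="\<lambda>x::real. 1 - (1 - x\<^sup>2) ^ 4"])
         (auto simp: g_def gp_def intro!: eventually_mono[OF ev])
  next
    case 2
    have ev: "eventually (\<lambda>y. y \<in> {y. 1 < \<bar>y\<bar>}) (nhds x)"
      using 2 by (intro eventually_nhds_in_open) (auto intro!: open_Collect_less continuous_intros)
    show ?thesis
      using 2
      by (subst DERIV_cong_ev[OF refl _ refl, where g="\<lambda>x::real. 1"])
         (auto simp: g_def gp_def intro!: eventually_mono[OF ev])
  next
    case 3
    then have "\<bar>x\<bar> \<le> 1" by simp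
    show ?thesis
    proof (rule deriv_glue[where fa="\<lambda>x. 1 - (1 - x\<^sup>2) ^ 4" and fb="\<lambda>_. 1"])
      show "((\<lambda>x. 1 - (1 - x\<^sup>2) ^ 4) has_real_derivative gp x) (at x)"
        using poly_deriv[of x] \<open>\<bar>x\<bar> \<le> 1\<close> by (simp add: gp_def)
      show "((\<lambda>_. 1) has_real_derivative gp x) (at x)" using 3 by (simp add: gp_def)
      show "\<forall>\<^sub>F y in at_left x. g y = 1 - (1 - y\<^sup>2) ^ 4"
        unfolding eventually_at_left_field using 3
        by (intro exI[of _ 0]) (auto simp: g_def)
      show "\<forall>\<^sub>F y in at_right x. g y = 1"
        unfolding eventually_at_right_field using 3
        by (intro exI[of _ 2]) (auto simp: g_def)
    qed (use 3 in \<open>auto simp: g_def gp_def\<close>)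
  next
    case 4
    then have "\<bar>x\<bar> \<le> 1" by simp
    show ?thesis
    proof (rule deriv_glue[where fb="\<lambda>x. 1 - (1 - x\<^sup>2) ^ 4" and fa="\<lambda>_. 1"])
      show "((\<lambda>x. 1 - (1 - x\<^sup>2) ^ 4) has_real_derivative gp x) (at x)"
        using poly_deriv[of x] \<open>\<bar>x\<bar> \<le> 1\<close> by (simp add: gp_def)
      show "((\<lambda>_. 1) has_real_derivative gp x) (at x)" using 4 by (simp add: gp_def)
      show "\<forall>\<^sub>F y in at_right x. g y = 1 - (1 - y\<^sup>2) ^ 4"
        unfolding eventually_at_right_field using 4
        by (intro exI[of _ 0]) (auto simp: g_def)
      show "\<forall>\<^sub>F y in at_left x. g y = 1"
        unfolding eventually_at_left_field using 4
        by (intro exI[of _ "-2"]) (auto simp: g_def)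
    qed (use 4 in \<open>auto simp: g_def gp_def\<close>)
  qed
qed

lemma deriv_g: "deriv g x = gp x"
  using g_deriv DERIV_imp_deriv by blast



definition rr :: "real \<Rightarrow> real" where "rr u = 4 - 6*u + 4*u\<^sup>2 - u^3"
definition GG :: "real \<Rightarrow> real" where "GG x = x * sqrt (rr (x\<^sup>2))"
definition Gd :: "real \<Rightarrow> real" where "Gd x = 4 * (1 - x\<^sup>2)^3 / sqrt (rr (x\<^sup>2))"

lemma rr_ge1: "u \<le> 1 \<Longrightarrow> rr u \<ge> 1"
proof -
  assume "u \<le> 1"
  have e: "rr u - 1 = (1 - u) * (3 - 3*u + u\<^sup>2)" by (simp add: rr_def power2_eq_square power3_eq_cube algebra_simps)
  have "3 - 3*u + u\<^sup>2 = (u - 3/2)\<^sup>2 + 3/4" by (simp add: power2_eq_square algebra_simps)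
  moreover have "(u - 3/2)\<^sup>2 \<ge> 0" by simp
  ultimately have "3 - 3*u + u\<^sup>2 > 0" by linarith
  then have "(1 - u) * (3 - 3*u + u\<^sup>2) \<ge> 0" using \<open>u \<le> 1\<close> by simp
  then show ?thesis using e by simp
qed

lemma rr_pos: "u \<le> 1 \<Longrightarrow> rr u > 0" using rr_ge1 by force

lemma GG_deriv:
  assumes "\<bar>x\<bar> \<le> 1" shows "(GG has_real_derivative Gd x) (at x)"
proof -
  have x2: "x\<^sup>2 \<le> 1" using assms by (simp add: abs_square_le_1)
  have p: "rr (x\<^sup>2) > 0" using rr_pos[OF x2] .
  define S where "S = sqrt (rr (x\<^sup>2))"
  have sp: "S > 0" using p S_def by simp
  have s: "S * S = rr (x\<^sup>2)" using p S_def by simp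
  have d1: "((\<lambda>x. rr (x\<^sup>2)) has_real_derivative (-6 + 8*x\<^sup>2 - 3*x^4) * (2*x)) (at x)"
    unfolding rr_def
    by (auto intro!: derivative_eq_intros simp: power2_eq_square power3_eq_cube power4_eq_xxxx algebra_simps)
  have d2: "((\<lambda>x. sqrt (rr (x\<^sup>2))) has_real_derivative (inverse S / 2) * ((-6 + 8*x\<^sup>2 - 3*x^4) * (2*x))) (at x)"
    using DERIV_chain2[OF DERIV_real_sqrt[OF p] d1] by (simp add: S_def)
  have d3: "(GG has_real_derivative (1 * S + x * ((inverse S / 2) * ((-6 + 8*x\<^sup>2 - 3*x^4) * (2*x))))) (at x)"
    unfolding GG_def using DERIV_mult[OF DERIV_ident d2] by (simp add: S_def mult_ac)
  have "1 * S + x * ((inverse S / 2) * ((-6 + 8*x\<^sup>2 - 3*x^4) * (2*x))) = (S * S + x\<^sup>2 * (-6 + 8*x\<^sup>2 - 3*x^4)) / S"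
    using sp by (simp add: field_simps power2_eq_square)
  also have "\<dots> = (rr (x\<^sup>2) + x\<^sup>2 * (-6 + 8*x\<^sup>2 - 3*x^4)) / S" using s by simp
  also have "rr (x\<^sup>2) + x\<^sup>2 * (-6 + 8*x\<^sup>2 - 3*x^4) = 4 * (1 - x\<^sup>2)^3"
    by (simp add: rr_def power2_eq_square power3_eq_cube power4_eq_xxxx algebra_simps)
  finally show ?thesis using d3 by (simp add: Gd_def S_def)
qed

lemma Gd_pos: "\<bar>x\<bar> < 1 \<Longrightarrow> Gd x > 0"
proof -
  assume "\<bar>x\<bar> < 1"
  then have "x\<^sup>2 < 1" by (simp add: abs_square_less_1)
  then show ?thesis unfolding Gd_def using rr_pos[of "x\<^sup>2"] by auto
qed

lemma GG_sq: "\<bar>x\<bar> \<le> 1 \<Longrightarrow> (GG x)\<^sup>2 = g x"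
proof -
  assume a: "\<bar>x\<bar> \<le> 1"
  then have x2: "x\<^sup>2 \<le> 1" by (simp add: abs_square_le_1)
  have "(GG x)\<^sup>2 = x\<^sup>2 * rr (x\<^sup>2)" unfolding GG_def using rr_pos[OF x2]
    by (simp add: power_mult_distrib)
  also have "\<dots> = g x" using a unfolding g_def rr_def
    by (simp add: power2_eq_square power3_eq_cube power4_eq_xxxx algebra_simps)
  finally show ?thesis .
qed

lemma GG_odd: "GG (-x) = - GG x" by (simp add: GG_def)
lemma GG_1: "GG 1 = 1" by (simp add: GG_def rr_def)
lemma GG_m1: "GG (-1) = -1" by (simp add: GG_def rr_def)
lemma GG_0: "GG 0 = 0" by (simp add: GG_def)

lemma GG_cont: "\<bar>x\<bar> \<le> 1 \<Longrightarrow> isCont GG x"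
  using GG_deriv DERIV_isCont by blast

lemma GG_mono:
  assumes "-1 \<le> x" "x < y" "y \<le> 1" shows "GG x < GG y"
proof (rule DERIV_pos_imp_increasing_open[OF assms(2)])
  fix z assume "x < z" "z < y"
  then have "\<bar>z\<bar> < 1" using assms by auto
  then show "\<exists>d. (GG has_real_derivative d) (at z) \<and> 0 < d"
    using GG_deriv Gd_pos by force
next
  show "continuous_on {x..y} GG"
    using assms by (intro continuous_at_imp_continuous_on ballI GG_cont) auto
qed

definition HH :: "real \<Rightarrow> real" where "HH s = (THE x. -1 \<le> x \<and> x \<le> 1 \<and> GG x = s)"

lemma GG_inj: "-1 \<le> x \<Longrightarrow> x \<le> 1 \<Longrightarrow> -1 \<le> y \<Longrightarrow> y \<le> 1 \<Longrightarrow> GG x = GG y \<Longrightarrow> x = y"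
  by (cases x y rule: linorder_cases) (auto dest: GG_mono)

lemma HH_ex: assumes "-1 \<le> s" "s \<le> 1" shows "\<exists>x. -1 \<le> x \<and> x \<le> 1 \<and> GG x = s"
proof -
  have "\<forall>x. -1 \<le> x \<and> x \<le> 1 \<longrightarrow> isCont GG x" using GG_cont by auto
  then show ?thesis using IVT[of GG "-1" s 1] assms GG_1 GG_m1 by auto
qed

lemma HH_props: assumes "-1 \<le> s" "s \<le> 1"
  shows "-1 \<le> HH s \<and> HH s \<le> 1 \<and> GG (HH s) = s"
proof -
  obtain x where x: "-1 \<le> x \<and> x \<le> 1 \<and> GG x = s" using HH_ex[OF assms] by blast
  have "HH s = x" unfolding HH_def
    by (rule the_equality) (use x GG_inj in auto)
  then show ?thesis using x by simp
qed

lemma HH_GG: "-1 \<le> x \<Longrightarrow> x \<le> 1 \<Longrightarrow> HH (GG x) = x"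
  unfolding HH_def by (rule the_equality) (use GG_inj in auto)

lemma GG_range: "-1 \<le> x \<Longrightarrow> x \<le> 1 \<Longrightarrow> -1 \<le> GG x \<and> GG x \<le> 1"
  using GG_mono[of "-1" x] GG_mono[of x 1] GG_1 GG_m1 by (cases "x = -1"; cases "x = 1") auto

lemma HH_odd: "-1 \<le> s \<Longrightarrow> s \<le> 1 \<Longrightarrow> HH (-s) = - HH s"
  by (metis GG_odd HH_GG HH_props minus_le_iff neg_le_iff_le)

lemma HH_mono: assumes "-1 \<le> s" "s < t" "t \<le> 1" shows "HH s < HH t"
proof (rule ccontr)
  assume "\<not> HH s < HH t"
  then have "HH t \<le> HH s" by simp
  moreover have "-1 \<le> HH t" "HH s \<le> 1" using HH_props assms by auto
  ultimately have "GG (HH t) \<le> GG (HH s)" using GG_mono[of "HH t" "HH s"] by (cases "HH t = HH s") auto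
  then show False using HH_props[of s] HH_props[of t] assms by auto
qed

lemma HH_0: "HH 0 = 0" using HH_GG[of 0] GG_0 by simp

lemma HH_strict: assumes "\<bar>s\<bar> < 1" shows "\<bar>HH s\<bar> < 1"
proof -
  have h: "-1 \<le> HH s" "HH s \<le> 1" "GG (HH s) = s" using HH_props[of s] assms by auto
  have "HH s \<noteq> 1" using h(3) GG_1 assms by auto
  moreover have "HH s \<noteq> -1" using h(3) GG_m1 assms by auto
  ultimately show ?thesis using h by auto
qed

lemma HH_cont: assumes "\<bar>s\<bar> < 1" shows "isCont HH s"
proof -
  have hs: "\<bar>HH s\<bar> < 1" using HH_strict assms .
  have "isCont HH (GG (HH s))"
    by (rule isCont_inverse_function[where d="1 - \<bar>HH s\<bar>"])
       (use hs in \<open>auto intro!: HH_GG GG_cont\<close>)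
  then show ?thesis using HH_props[of s] assms by simp
qed

lemma HH_deriv: assumes "\<bar>s\<bar> < 1" shows "(HH has_real_derivative inverse (Gd (HH s))) (at s)"
proof (rule DERIV_inverse_function[where f=GG and a="-1" and b=1])
  show "(GG has_real_derivative Gd (HH s)) (at (HH s))"
    using GG_deriv HH_strict assms by force
  show "Gd (HH s) \<noteq> 0" using Gd_pos HH_strict assms by force
  show "isCont HH s" using HH_cont assms .
qed (use assms HH_props in auto)



definition kk :: "real \<Rightarrow> real" where "kk u = sqrt (rr u) / (4 * (1 - u)^3)"
definition QQ :: "real \<Rightarrow> real" where "QQ u = rr u / (1 - u)^6"

lemma QQ_deriv: assumes "u < 1"
  shows "(QQ has_real_derivative (18 - 22*u + 13*u\<^sup>2 - 3*u^3) / (1 - u)^7) (at u)"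
proof -
  have ne: "1 - u \<noteq> 0" using assms by simp
  have n12: "(1 - u)^12 \<noteq> 0" "(1 - u)^7 \<noteq> 0" "(1 - u)^6 \<noteq> 0" using ne by auto
  have d1: "(rr has_real_derivative (-6 + 8*u - 3*u\<^sup>2)) (at u)"
    unfolding rr_def by (auto intro!: derivative_eq_intros simp: power2_eq_square)
  have d2: "((\<lambda>u. (1 - u)^6) has_real_derivative (6 * (1 - u)^5 * (-1))) (at u)"
    by (auto intro!: derivative_eq_intros)
  have "(QQ has_real_derivative ((-6 + 8*u - 3*u\<^sup>2) * (1 - u)^6 - rr u * (6 * (1 - u)^5 * (-1))) / ((1 - u)^6)\<^sup>2) (at u)"
    unfolding QQ_def using DERIV_quotient[OF d1 d2] n12 by (simp add: mult_ac)
  moreover have "((-6 + 8*u - 3*u\<^sup>2) * (1 - u)^6 - rr u * (6 * (1 - u)^5 * (-1))) / ((1 - u)^6)\<^sup>2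
     = (18 - 22*u + 13*u\<^sup>2 - 3*u^3) / (1 - u)^7"
    apply (subst frac_eq_eq)
    using n12 apply simp
    using n12 apply simp
    apply (simp add: rr_def power2_eq_square power3_eq_cube)
    apply algebra
    done
  ultimately show ?thesis by simp
qed

lemma poly_pos: "0 \<le> u \<Longrightarrow> u \<le> 1 \<Longrightarrow> 18 - 22*u + 13*u\<^sup>2 - 3*u^3 > (0::real)"
proof -
  assume u: "0 \<le> u" "u \<le> 1"
  have e: "18 - 22*u + 13*u\<^sup>2 - 3*u^3 = 6 + (1 - u) * ((12 - 10*u + 3*u\<^sup>2))"
    by (simp add: power2_eq_square power3_eq_cube algebra_simps)
  have "12 - 10*u + 3*u\<^sup>2 = 3 * (u - 5/3)\<^sup>2 + 11/3" by (simp add: power2_eq_square algebra_simps)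
  moreover have "(u - 5/3)\<^sup>2 \<ge> 0" by simp
  ultimately have "12 - 10*u + 3*u\<^sup>2 > 0" by linarith
  then have "(1 - u) * ((12 - 10*u + 3*u\<^sup>2)) \<ge> 0" using u by simp
  then show ?thesis using e by linarith
qed

lemma QQ_mono: assumes "0 \<le> u" "u < v" "v < 1" shows "QQ u < QQ v"
proof (rule DERIV_pos_imp_increasing[OF assms(2)])
  fix x assume "u \<le> x" "x \<le> v"
  then have x: "0 \<le> x" "x < 1" using assms by auto
  then show "\<exists>y. (QQ has_real_derivative y) (at x) \<and> 0 < y"
    using QQ_deriv[of x] poly_pos[of x] by (intro exI[of _ "(18 - 22*x + 13*x\<^sup>2 - 3*x^3) / (1 - x)^7"]) auto
qed

lemma kk_QQ: assumes "u < 1" "u \<le> 1" shows "kk u = sqrt (QQ u) / 4"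
proof -
  have "sqrt ((1 - u)^6) = (1 - u)^3"
    by (rule real_sqrt_unique) (use assms in \<open>auto simp: power_mult[symmetric]\<close>)
  then show ?thesis unfolding kk_def QQ_def by (simp add: real_sqrt_divide)
qed

lemma kk_mono: assumes "0 \<le> u" "u < v" "v < 1" shows "kk u < kk v"
proof -
  have "sqrt (QQ u) < sqrt (QQ v)" using QQ_mono[OF assms] by simp
  moreover have "kk u = sqrt (QQ u) / 4" "kk v = sqrt (QQ v) / 4" using kk_QQ[of u] kk_QQ[of v] assms by auto
  ultimately show ?thesis by linarith
qed

lemma kk_cont: "u < 1 \<Longrightarrow> isCont kk u"
  unfolding kk_def rr_def by (auto intro!: continuous_intros)

definition kap :: "real \<Rightarrow> real" where "kap s = kk ((HH s)\<^sup>2)"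

lemma HH_sq_lt: "\<bar>s\<bar> < 1 \<Longrightarrow> (HH s)\<^sup>2 < 1"
  using HH_strict abs_square_less_1 by blast

lemma HH_deriv_kap: assumes "\<bar>s\<bar> < 1" shows "(HH has_real_derivative kap s) (at s)"
proof -
  have h: "(HH s)\<^sup>2 < 1" using HH_sq_lt assms .
  have "inverse (Gd (HH s)) = kap s" unfolding Gd_def kap_def kk_def using h
    by (simp add: field_simps)
  then show ?thesis using HH_deriv[OF assms] by simp
qed

lemma kap_cont: assumes "\<bar>s\<bar> < 1" shows "isCont kap s"
proof -
  have "isCont (\<lambda>s. kk ((HH s)\<^sup>2)) s"
    by (rule continuous_at_compose[unfolded o_def, where f="\<lambda>s. (HH s)\<^sup>2"])
       (use HH_cont[OF assms] kk_cont HH_sq_lt[OF assms] in \<open>auto intro!: continuous_intros\<close>)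
  then show ?thesis unfolding kap_def .
qed

lemma kap_even: "\<bar>s\<bar> \<le> 1 \<Longrightarrow> kap (-s) = kap s"
  unfolding kap_def using HH_odd[of s] by auto

lemma kap_abs: "\<bar>s\<bar> \<le> 1 \<Longrightarrow> kap \<bar>s\<bar> = kap s"
  using kap_even by (cases "s \<ge> 0") auto

lemma HH_nonneg: "0 \<le> s \<Longrightarrow> s \<le> 1 \<Longrightarrow> 0 \<le> HH s"
  using HH_mono[of 0 s] HH_0 by (cases "s = 0") auto

lemma kap_mono_pos: assumes "0 \<le> s" "s < t" "t < 1" shows "kap s < kap t"
proof -
  have a: "0 \<le> HH s" using HH_nonneg assms by auto
  have b: "HH s < HH t" using HH_mono assms by auto
  have "(HH s)\<^sup>2 < (HH t)\<^sup>2" using a b by (simp add: power_strict_mono)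
  moreover have "(HH t)\<^sup>2 < 1" using HH_sq_lt assms by auto
  ultimately show ?thesis unfolding kap_def by (intro kk_mono) auto
qed

lemma kap_mono: assumes "\<bar>s\<bar> < \<bar>t\<bar>" "\<bar>t\<bar> < 1" shows "kap s < kap t"
  using kap_mono_pos[of "\<bar>s\<bar>" "\<bar>t\<bar>"] assms kap_abs[of s] kap_abs[of t] by auto

lemma kap_mono_le: assumes "\<bar>s\<bar> \<le> \<bar>t\<bar>" "\<bar>t\<bar> < 1" shows "kap s \<le> kap t"
proof (cases "\<bar>s\<bar> = \<bar>t\<bar>")
  case True
  then have "kap s = kap t" using kap_abs[of s] kap_abs[of t] assms by (metis less_imp_le order_trans)
  then show ?thesis by simp
next
  case False
  then show ?thesis using kap_mono[OF _ assms(2), of s] assms by simp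
qed

lemma kap_0: "kap 0 = 1/2"
  unfolding kap_def kk_def HH_0 rr_def by simp

lemma kap_pos: assumes "\<bar>s\<bar> < 1" shows "kap s > 0"
proof -
  have h: "(HH s)\<^sup>2 < 1" using HH_sq_lt assms .
  then have "rr ((HH s)\<^sup>2) > 0" using rr_pos by simp
  then have "sqrt (rr ((HH s)\<^sup>2)) > 0" by simp
  moreover have "(1 - (HH s)\<^sup>2)^3 > 0" using h by simp
  ultimately show ?thesis unfolding kap_def kk_def by simp
qed

lemma kap_lower:
  assumes "0 \<le> s" "s < 1"
  obtains y where "0 < y" "y \<le> 1" "y^4 \<le> 2 * (1 - s)" "kap s \<ge> 1 / (4 * y^3)"
proof -
  define x where "x = HH s"
  have x: "0 \<le> x" "x\<^sup>2 < 1" "GG x = s" "-1 \<le> x" "x \<le> 1"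
    using HH_nonneg HH_sq_lt HH_props assms unfolding x_def by auto
  define y where "y = 1 - x\<^sup>2"
  have y: "0 < y" "y \<le> 1" using x unfolding y_def by auto
  have "s\<^sup>2 = g x" using GG_sq[of x] x by auto
  also have "\<dots> = 1 - y^4" unfolding g_def y_def using x by auto
  finally have s2: "s\<^sup>2 = 1 - y^4" .
  have y4: "y^4 \<le> 1" using y by (simp add: power_le_one)
  have "s\<^sup>2 \<le> (1 - y^4/2)\<^sup>2" using s2 by (simp add: power2_eq_square algebra_simps)
  then have "s \<le> 1 - y^4/2" by (rule power2_le_imp_le) (use y4 in simp)
  then have "y^4 \<le> 2 * (1 - s)" by simp
  moreover have "kap s \<ge> 1 / (4 * y^3)"
  proof -
    have "rr (x\<^sup>2) \<ge> 1" using rr_ge1 x by auto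
    then have "sqrt (rr (x\<^sup>2)) \<ge> 1" by simp
    moreover have "kap s = sqrt (rr (x\<^sup>2)) / (4 * y^3)" unfolding kap_def kk_def x_def y_def ..
    ultimately show ?thesis using y by (simp add: divide_right_mono)
  qed
  ultimately show ?thesis using that y by blast
qed



lemma deriv_bound:
  fixes h h' :: "real \<Rightarrow> real"
  assumes "a \<le> b" and der: "\<And>x. a \<le> x \<Longrightarrow> x \<le> b \<Longrightarrow> (h has_real_derivative h' x) (at x)"
    and lo: "\<And>x. a \<le> x \<Longrightarrow> x \<le> b \<Longrightarrow> l \<le> h' x"
    and hi: "\<And>x. a \<le> x \<Longrightarrow> x \<le> b \<Longrightarrow> h' x \<le> u"
  shows "l * (b - a) \<le> h b - h a \<and> h b - h a \<le> u * (b - a)"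
proof (cases "a = b")
  case True then show ?thesis by simp
next
  case False
  then have "a < b" using assms by simp
  from MVT2[OF this der] obtain z where z: "a < z" "z < b" "h b - h a = (b - a) * h' z" by auto
  have "l \<le> h' z" "h' z \<le> u" using lo hi z by auto
  then show ?thesis using z \<open>a < b\<close> by (simp add: mult_right_mono mult.commute)
qed

definition kf :: "real \<Rightarrow> real \<Rightarrow> real" where "kf e x = kap (e * sin x) / sqrt 2"

lemma abs_esin: "\<bar>e\<bar> < 1 \<Longrightarrow> \<bar>e * sin (x::real)\<bar> < 1"
proof -
  assume "\<bar>e\<bar> < 1"
  moreover have "\<bar>e\<bar> * \<bar>sin x\<bar> \<le> \<bar>e\<bar> * 1" using abs_sin_le_one[of x] by (intro mult_left_mono) auto
  ultimately have "\<bar>e\<bar> * \<bar>sin x\<bar> < 1" by simp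
  then show ?thesis by (simp add: abs_mult)
qed

lemma kf_pos: assumes "\<bar>e\<bar> < 1" shows "kf e x > 0"
proof -
  have "kap (e * sin x) > 0" using kap_pos abs_esin[OF assms] by blast
  then show ?thesis unfolding kf_def by simp
qed

lemma kf_cont: "\<bar>e\<bar> < 1 \<Longrightarrow> isCont (kf e) x"
proof -
  assume e: "\<bar>e\<bar> < 1"
  have "isCont (\<lambda>x. kap (e * sin x)) x"
    by (rule continuous_at_compose[unfolded o_def, where f="\<lambda>x. e * sin x"])
       (use kap_cont abs_esin[OF e] in \<open>auto intro!: continuous_intros\<close>)
  then show ?thesis unfolding kf_def by (auto intro!: continuous_intros)
qed

lemma kf_periodic: "kf e (x + 2 * pi) = kf e x"
  unfolding kf_def by simp

definition Fa :: "real \<Rightarrow> real \<Rightarrow> real" where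
  "Fa e = (SOME F. (\<forall>x. (F has_real_derivative kf e x) (at x)) \<and> F 0 = 0)"

lemma Fa_ex: assumes "\<bar>e\<bar> < 1"
  shows "\<exists>F. (\<forall>x. (F has_real_derivative kf e x) (at x)) \<and> F 0 = 0"
proof -
  obtain F where F: "\<forall>x::real. -\<infinity> < x \<longrightarrow> x < \<infinity> \<longrightarrow> (F has_vector_derivative kf e x) (at x)"
    using einterval_antiderivative[of "-\<infinity>" "\<infinity>" "kf e"] kf_cont[OF assms] by auto
  then have "\<forall>x. (F has_real_derivative kf e x) (at x)"
    by (simp add: has_real_derivative_iff_has_vector_derivative)
  then have "\<forall>x. ((\<lambda>x. F x - F 0) has_real_derivative kf e x) (at x)"
    by (auto intro!: derivative_eq_intros)
  then show ?thesis by (intro exI[of _ "\<lambda>x. F x - F 0"]) auto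
qed

lemma Fa: assumes "\<bar>e\<bar> < 1"
  shows "(Fa e has_real_derivative kf e x) (at x)" "Fa e 0 = 0"
  using someI_ex[OF Fa_ex[OF assms]] unfolding Fa_def[symmetric] by auto

definition Tp :: "real \<Rightarrow> real" where "Tp e = Fa e (2 * pi)"

lemma Fa_shift: assumes "\<bar>e\<bar> < 1" shows "Fa e (x + 2 * pi) = Fa e x + Tp e"
proof -
  have "\<forall>x. ((\<lambda>x. Fa e (x + 2 * pi) - Fa e x) has_real_derivative 0) (at x)"
  proof
    fix x
    have d1: "((\<lambda>z. Fa e (z + 2 * pi)) has_real_derivative kf e (x + 2 * pi)) (at x)"
      using Fa(1)[OF assms, of "x + 2 * pi"] DERIV_shift by blast
    have "((\<lambda>x. Fa e (x + 2 * pi) - Fa e x) has_real_derivative kf e (x + 2 * pi) - kf e x) (at x)"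
      by (rule DERIV_diff[OF d1 Fa(1)[OF assms]])
    then show "((\<lambda>x. Fa e (x + 2 * pi) - Fa e x) has_real_derivative 0) (at x)"
      by (simp add: kf_periodic)
  qed
  from DERIV_isconst_all[OF this, of x 0] show ?thesis using Fa(2)[OF assms] unfolding Tp_def by simp
qed

lemma Fa_mono: assumes "\<bar>e\<bar> < 1" "x < y" shows "Fa e x < Fa e y"
  using DERIV_pos_imp_increasing[OF assms(2)] Fa(1)[OF assms(1)] kf_pos[OF assms(1)] by blast

lemma Tp_pos: "\<bar>e\<bar> < 1 \<Longrightarrow> Tp e > 0"
  using Fa_mono[of e 0 "2*pi"] Fa(2) unfolding Tp_def by auto

lemma Fa_cont: "\<bar>e\<bar> < 1 \<Longrightarrow> isCont (Fa e) x"
  using Fa(1) DERIV_isCont by blast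

lemma Fa_shift_nat: assumes "\<bar>e\<bar> < 1"
  shows "Fa e (x + 2 * pi * real n) = Fa e x + real n * Tp e"
proof (induction n)
  case (Suc n)
  have "x + 2 * pi * real (Suc n) = (x + 2 * pi * real n) + 2 * pi"
    by (simp add: algebra_simps)
  then have "Fa e (x + 2 * pi * real (Suc n)) = Fa e ((x + 2 * pi * real n) + 2 * pi)" by (simp only:)
  also have "\<dots> = Fa e (x + 2 * pi * real n) + Tp e" by (rule Fa_shift[OF assms])
  also have "\<dots> = Fa e x + real (Suc n) * Tp e" using Suc by (simp add: algebra_simps)
  finally show ?case .
qed simp

lemma Fa_surj: assumes "\<bar>e\<bar> < 1" shows "\<exists>x. Fa e x = t"
proof -
  have T: "Tp e > 0" using Tp_pos assms .
  obtain n :: nat where n: "real n > \<bar>t\<bar> / Tp e" using reals_Archimedean2 by blast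
  then have n1: "real n * Tp e > \<bar>t\<bar>" using T by (simp add: field_simps)
  have a: "Fa e (2 * pi * real n) = real n * Tp e"
    using Fa_shift_nat[OF assms, of 0 n] Fa(2)[OF assms] by simp
  have b: "Fa e (- 2 * pi * real n) = - real n * Tp e"
    using Fa_shift_nat[OF assms, of "- 2 * pi * real n" n] Fa(2)[OF assms] by simp
  have "- 2 * pi * real n \<le> 2 * pi * real n" by simp
  moreover have "Fa e (- 2 * pi * real n) \<le> t" "t \<le> Fa e (2 * pi * real n)" using a b n1 by auto
  ultimately show ?thesis using IVT[of "Fa e" "- 2 * pi * real n" t "2 * pi * real n"] Fa_cont[OF assms] by auto
qed

definition th :: "real \<Rightarrow> real \<Rightarrow> real" where "th e t = (THE x. Fa e x = t)"

lemma Fa_inj: "\<bar>e\<bar> < 1 \<Longrightarrow> Fa e x = Fa e y \<Longrightarrow> x = y"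
  by (metis Fa_mono less_irrefl linorder_neqE_linordered_idom)

lemma Fa_th: assumes "\<bar>e\<bar> < 1" shows "Fa e (th e t) = t"
proof -
  obtain x where x: "Fa e x = t" using Fa_surj[OF assms] by blast
  have "th e t = x" unfolding th_def by (rule the_equality) (use x Fa_inj[OF assms] in auto)
  then show ?thesis using x by simp
qed

lemma th_Fa: assumes "\<bar>e\<bar> < 1" shows "th e (Fa e x) = x"
  using Fa_th[OF assms] Fa_inj[OF assms] by blast

lemma th_0: "\<bar>e\<bar> < 1 \<Longrightarrow> th e 0 = 0"
  using th_Fa[of e 0] Fa(2) by simp

lemma th_mono: assumes "\<bar>e\<bar> < 1" "s < t" shows "th e s < th e t"
  by (metis Fa_th Fa_mono assms less_irrefl linorder_neqE_linordered_idom order.asym)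

lemma th_shift: assumes "\<bar>e\<bar> < 1" shows "th e (t + Tp e) = th e t + 2 * pi"
proof -
  have "Fa e (th e t + 2 * pi) = t + Tp e" using Fa_shift[OF assms] Fa_th[OF assms] by simp
  then show ?thesis using th_Fa[OF assms, of "th e t + 2 * pi"] by simp
qed

lemma th_cont: assumes "\<bar>e\<bar> < 1" shows "isCont (th e) t"
proof -
  have "isCont (th e) (Fa e (th e t))"
    by (rule isCont_inverse_function[where d=1]) (use assms th_Fa Fa_cont in auto)
  then show ?thesis using Fa_th[OF assms] by simp
qed

lemma th_deriv: assumes "\<bar>e\<bar> < 1"
  shows "(th e has_real_derivative inverse (kf e (th e t))) (at t)"
proof (rule DERIV_inverse_function[where f="Fa e" and a="t - 1" and b="t + 1"])
  show "(Fa e has_real_derivative kf e (th e t)) (at (th e t))" using Fa(1)[OF assms] .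
  show "kf e (th e t) \<noteq> 0" using kf_pos[OF assms] by (metis less_irrefl)
  show "isCont (th e) t" using th_cont[OF assms] .
qed (use Fa_th[OF assms] in auto)



definition qs :: "real \<Rightarrow> real \<Rightarrow> real" where "qs e t = HH (e * sin (th e t))"
definition ps :: "real \<Rightarrow> real \<Rightarrow> real" where "ps e t = sqrt 2 * e * cos (th e t)"

lemma gp_kap: assumes "\<bar>s\<bar> < 1" shows "gp (HH s) = 2 * s / kap s"
proof -
  define x where "x = HH s"
  have x: "\<bar>x\<bar> < 1" "GG x = s" using HH_strict[OF assms] HH_props[of s] assms unfolding x_def by auto
  have x2: "x\<^sup>2 < 1" using x by (simp add: abs_square_less_1)
  have r: "sqrt (rr (x\<^sup>2)) > 0" using rr_pos x2 by simp
  have k: "kap s = sqrt (rr (x\<^sup>2)) / (4 * (1 - x\<^sup>2)^3)" unfolding kap_def kk_def x_def ..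
  have "2 * s / kap s = 2 * (x * sqrt (rr (x\<^sup>2))) / (sqrt (rr (x\<^sup>2)) / (4 * (1 - x\<^sup>2)^3))"
    using x k unfolding GG_def by simp
  also have "\<dots> = 8 * x * (1 - x\<^sup>2)^3" using r x2 by (simp add: field_simps)
  finally show ?thesis unfolding x_def[symmetric] gp_def using x by simp
qed

lemma sol_exists: assumes e: "\<bar>e\<bar> < 1"
  shows "is_solution (sqrt 2 * e) (qs e) (ps e)"
  unfolding is_solution_def deriv_g
proof (intro conjI allI)
  show "qs e 0 = 0" unfolding qs_def using th_0[OF e] HH_0 by simp
  show "ps e 0 = sqrt 2 * e" unfolding ps_def using th_0[OF e] by simp
next
  fix t
  let ?s = "e * sin (th e t)"
  have s: "\<bar>?s\<bar> < 1" using abs_esin[OF e] .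
  have kp: "kap ?s > 0" using kap_pos[OF s] .
  have dth: "(th e has_real_derivative inverse (kf e (th e t))) (at t)" using th_deriv[OF e] .
  have inv: "inverse (kf e (th e t)) = sqrt 2 / kap ?s" unfolding kf_def by simp
  have ds: "((\<lambda>t. e * sin (th e t)) has_real_derivative e * (cos (th e t) * (sqrt 2 / kap ?s))) (at t)"
    using dth unfolding inv by (auto intro!: derivative_eq_intros)
  have "(qs e has_real_derivative kap ?s * (e * (cos (th e t) * (sqrt 2 / kap ?s)))) (at t)"
    unfolding qs_def using DERIV_chain2[OF HH_deriv_kap[OF s] ds] by simp
  moreover have "kap ?s * (e * (cos (th e t) * (sqrt 2 / kap ?s))) = ps e t"
    unfolding ps_def using kp by (simp add: field_simps)
  ultimately show "(qs e has_real_derivative ps e t) (at t)" by simp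
  have "(ps e has_real_derivative sqrt 2 * e * (- sin (th e t) * (sqrt 2 / kap ?s))) (at t)"
    unfolding ps_def using dth unfolding inv by (auto intro!: derivative_eq_intros)
  moreover have "sqrt 2 * e * (- sin (th e t) * (sqrt 2 / kap ?s)) = - gp (qs e t)"
    unfolding qs_def gp_kap[OF s] using kp by (simp add: field_simps)
  ultimately show "(ps e has_real_derivative - gp (qs e t)) (at t)" by simp
qed

lemma deriv_le:
  fixes h h' :: "real \<Rightarrow> real"
  assumes "a \<le> b" and der: "\<And>x. (h has_real_derivative h' x) (at x)"
    and hi: "\<And>x. h' x \<le> c"
  shows "h b - h a \<le> c * (b - a)"
proof (cases "a = b")
  case False
  then have "a < b" using assms by simp
  from MVT2[OF this, of h h'] der obtain z where z: "h b - h a = (b - a) * h' z" by auto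
  have "h' z * (b - a) \<le> c * (b - a)" by (rule mult_right_mono) (use hi \<open>a \<le> b\<close> in auto)
  then show ?thesis using z by (simp add: mult.commute)
qed simp

lemma deriv_ge:
  fixes h h' :: "real \<Rightarrow> real"
  assumes "a \<le> b" and der: "\<And>x. (h has_real_derivative h' x) (at x)"
    and lo: "\<And>x. c \<le> h' x"
  shows "c * (b - a) \<le> h b - h a"
proof (cases "a = b")
  case False
  then have "a < b" using assms by simp
  from MVT2[OF this, of h h'] der obtain z where z: "h b - h a = (b - a) * h' z" by auto
  have "c * (b - a) \<le> h' z * (b - a)" by (rule mult_right_mono) (use lo \<open>a \<le> b\<close> in auto)
  then show ?thesis using z by (simp add: mult.commute)
qed simp

lemma P_lip: fixes a b :: real assumes "\<bar>a\<bar> \<le> 1" "\<bar>b\<bar> \<le> 1"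
  shows "\<bar>8 * a * (1 - a\<^sup>2)^3 - 8 * b * (1 - b\<^sup>2)^3\<bar> \<le> 56 * \<bar>a - b\<bar>"
proof -
  let ?P = "\<lambda>x::real. 8 * x * (1 - x\<^sup>2)^3"
  let ?P' = "\<lambda>x::real. 8 * (1 - x\<^sup>2)^3 - 48 * x\<^sup>2 * (1 - x\<^sup>2)^2"
  have der: "(?P has_real_derivative ?P' x) (at x)" for x
    by (rule DERIV_cong, (rule derivative_eq_intros refl)+)
       (simp add: power2_eq_square power3_eq_cube algebra_simps)
  have bnd: "-56 \<le> ?P' x \<and> ?P' x \<le> 56" if "\<bar>x\<bar> \<le> 1" for x
  proof -
    have x2: "0 \<le> x\<^sup>2" "x\<^sup>2 \<le> 1" using that by (auto simp: abs_square_le_1)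
    have y: "0 \<le> 1 - x\<^sup>2" "1 - x\<^sup>2 \<le> 1" using x2 by auto
    have y3: "0 \<le> (1 - x\<^sup>2)^3" "(1 - x\<^sup>2)^3 \<le> 1" using y by (auto simp: power_le_one)
    have y2: "0 \<le> (1 - x\<^sup>2)^2" "(1 - x\<^sup>2)^2 \<le> 1" using y by (auto simp: power_le_one)
    have z: "0 \<le> x\<^sup>2 * (1 - x\<^sup>2)^2" "x\<^sup>2 * (1 - x\<^sup>2)^2 \<le> 1"
      using x2 y2 by (auto simp: mult_le_one)
    have "48 * x\<^sup>2 * (1 - x\<^sup>2)\<^sup>2 = 48 * (x\<^sup>2 * (1 - x\<^sup>2)\<^sup>2)" by simp
    then show ?thesis using y3 z by linarith
  qed
  have main: "\<bar>?P u - ?P v\<bar> \<le> 56 * \<bar>u - v\<bar>" if "\<bar>u\<bar> \<le> 1" "\<bar>v\<bar> \<le> 1" "v \<le> u" for u v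
  proof -
    have "-56 * (u - v) \<le> ?P u - ?P v \<and> ?P u - ?P v \<le> 56 * (u - v)"
      by (rule deriv_bound[OF \<open>v \<le> u\<close> der]) (use that bnd in auto)
    then show ?thesis using that by auto
  qed
  show ?thesis
  proof (cases "b \<le> a")
    case True then show ?thesis using main assms by blast
  next
    case False then show ?thesis using main[of b a] assms by (simp add: abs_minus_commute)
  qed
qed

definition clamp :: "real \<Rightarrow> real" where "clamp x = max (-1) (min 1 x)"

lemma gp_clamp: "gp x = gp (clamp x)"
proof -
  consider "\<bar>x\<bar> \<le> 1" | "x > 1" | "x < -1" by linarith
  then show ?thesis
  proof cases
    case 1 then have "clamp x = x" unfolding clamp_def by auto
    then show ?thesis by simp
  next
    case 2 then have "clamp x = 1" unfolding clamp_def by auto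
    then show ?thesis using 2 unfolding gp_def by simp
  next
    case 3 then have "clamp x = -1" unfolding clamp_def by auto
    then show ?thesis using 3 unfolding gp_def by simp
  qed
qed

lemma gp_lip: "\<bar>gp x - gp y\<bar> \<le> 56 * \<bar>x - y\<bar>"
proof -
  have c: "\<bar>clamp x\<bar> \<le> 1" "\<bar>clamp y\<bar> \<le> 1" unfolding clamp_def by auto
  have "\<bar>gp x - gp y\<bar> = \<bar>gp (clamp x) - gp (clamp y)\<bar>" using gp_clamp by simp
  also have "\<dots> \<le> 56 * \<bar>clamp x - clamp y\<bar>" unfolding gp_def using c P_lip by simp
  also have "\<bar>clamp x - clamp y\<bar> \<le> \<bar>x - y\<bar>" unfolding clamp_def by auto
  finally show ?thesis by simp
qed

lemma sol_unique:
  assumes s1: "is_solution po q1 p1" and s2: "is_solution po q2 p2"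
  shows "q1 = q2 \<and> p1 = p2"
proof -
  note d = s1[unfolded is_solution_def deriv_g] s2[unfolded is_solution_def deriv_g]
  define u where "u t = (q1 t - q2 t)\<^sup>2 + (p1 t - p2 t)\<^sup>2" for t
  define u' where "u' t = 2 * (q1 t - q2 t) * (p1 t - p2 t) + 2 * (p1 t - p2 t) * (gp (q2 t) - gp (q1 t))" for t
  have du: "(u has_real_derivative u' t) (at t)" for t
    unfolding u_def u'_def
    by (rule DERIV_cong, (rule derivative_eq_intros refl | use d in blast)+)
       (simp add: algebra_simps)
  have ub: "\<bar>u' t\<bar> \<le> 57 * u t" for t
  proof -
    define a where "a = q1 t - q2 t"
    define b where "b = p1 t - p2 t"
    have l: "\<bar>gp (q2 t) - gp (q1 t)\<bar> \<le> 56 * \<bar>a\<bar>" using gp_lip unfolding a_def by (simp add: abs_minus_commute)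
    have "\<bar>u' t\<bar> \<le> 2 * \<bar>a\<bar> * \<bar>b\<bar> + 2 * \<bar>b\<bar> * \<bar>gp (q2 t) - gp (q1 t)\<bar>"
      unfolding u'_def a_def[symmetric] b_def[symmetric] by (simp add: abs_mult abs_triangle_ineq[THEN order_trans])
    also have "\<dots> \<le> 2 * \<bar>a\<bar> * \<bar>b\<bar> + 2 * \<bar>b\<bar> * (56 * \<bar>a\<bar>)"
      using l by (intro add_left_mono mult_left_mono) auto
    also have "\<dots> = 114 * (\<bar>a\<bar> * \<bar>b\<bar>)" by simp
    also have "\<dots> \<le> 57 * (a\<^sup>2 + b\<^sup>2)"
    proof -
      have "0 \<le> (\<bar>a\<bar> - \<bar>b\<bar>)\<^sup>2" by simp
      then have "2 * (\<bar>a\<bar> * \<bar>b\<bar>) \<le> a\<^sup>2 + b\<^sup>2" by (simp add: power2_eq_square algebra_simps)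
      then show ?thesis by simp
    qed
    finally show ?thesis unfolding u_def a_def b_def .
  qed
  have u0: "u 0 = 0" unfolding u_def using d by simp
  have unn: "u t \<ge> 0" for t unfolding u_def by simp
  have uz: "u t = 0" for t
  proof (cases "t \<ge> 0")
    case True
    have dw: "((\<lambda>x. u x * exp (- 57 * x)) has_real_derivative (u' x * exp (- 57 * x) + u x * (exp (- 57 * x) * (- 57)))) (at x)" for x
      by (rule DERIV_cong, (rule derivative_eq_intros refl du)+) simp
    have "u t * exp (- 57 * t) - u 0 * exp (- 57 * 0) \<le> 0 * (t - 0)"
    proof (rule deriv_le[OF True dw])
      fix x
      have "u' x \<le> 57 * u x" using ub[of x] by simp
      then have "u' x * exp (- 57 * x) \<le> (57 * u x) * exp (- 57 * x)" by (rule mult_right_mono) simp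
      then show "u' x * exp (- 57 * x) + u x * (exp (- 57 * x) * (- 57)) \<le> 0" by (simp add: algebra_simps)
    qed
    then have "u t * exp (- 57 * t) \<le> 0" using u0 by simp
    then have "u t \<le> 0" by (simp add: mult_le_0_iff)
    then show ?thesis using unn[of t] by simp
  next
    case False
    then have t: "t \<le> 0" by simp
    have dv: "((\<lambda>x. u x * exp (57 * x)) has_real_derivative (u' x * exp (57 * x) + u x * (exp (57 * x) * 57))) (at x)" for x
      by (rule DERIV_cong, (rule derivative_eq_intros refl du)+) simp
    have "0 * (0 - t) \<le> u 0 * exp (57 * 0) - u t * exp (57 * t)"
    proof (rule deriv_ge[OF t dv])
      fix x
      have "- 57 * u x \<le> u' x" using ub[of x] by simp
      then have "(- 57 * u x) * exp (57 * x) \<le> u' x * exp (57 * x)" by (rule mult_right_mono) simp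
      then show "0 \<le> u' x * exp (57 * x) + u x * (exp (57 * x) * 57)" by (simp add: algebra_simps)
    qed
    then have "u t * exp (57 * t) \<le> 0" using u0 by simp
    then have "u t \<le> 0" by (simp add: mult_le_0_iff)
    then show ?thesis using unn[of t] by simp
  qed
  have "q1 t = q2 t \<and> p1 t = p2 t" for t
  proof -
    have "(q1 t - q2 t)\<^sup>2 + (p1 t - p2 t)\<^sup>2 = 0" using uz[of t] unfolding u_def .
    then show ?thesis by (simp add: sum_power2_eq_zero_iff)
  qed
  then show ?thesis by auto
qed

lemma sol_q_eq: assumes "\<bar>e\<bar> < 1" shows "sol_q (sqrt 2 * e) = qs e"
proof -
  have "(THE qp. is_solution (sqrt 2 * e) (fst qp) (snd qp)) = (qs e, ps e)"
  proof (rule the_equality)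
    show "is_solution (sqrt 2 * e) (fst (qs e, ps e)) (snd (qs e, ps e))" using sol_exists[OF assms] by simp
  next
    fix qp assume "is_solution (sqrt 2 * e) (fst qp) (snd qp)"
    then have "fst qp = qs e \<and> snd qp = ps e" using sol_unique sol_exists[OF assms] by blast
    then show "qp = (qs e, ps e)" by (simp add: prod_eq_iff)
  qed
  then show ?thesis unfolding sol_q_def by simp
qed



lemma deriv_ge_on:
  fixes h h' :: "real \<Rightarrow> real"
  assumes "a \<le> b" and der: "\<And>x. (h has_real_derivative h' x) (at x)"
    and lo: "\<And>x. a \<le> x \<Longrightarrow> x \<le> b \<Longrightarrow> c \<le> h' x"
  shows "c * (b - a) \<le> h b - h a"
proof (cases "a = b")
  case False
  then have "a < b" using assms by simp
  from MVT2[OF this, of h h'] der obtain z where z: "a < z" "z < b" "h b - h a = (b - a) * h' z" by auto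
  have "c * (b - a) \<le> h' z * (b - a)" by (rule mult_right_mono) (use lo z \<open>a \<le> b\<close> in auto)
  then show ?thesis using z by (simp add: mult.commute)
qed simp

lemma sin_lt_1: assumes "pi/2 < x" "x < pi/2 + 2*pi" shows "sin x < 1"
proof -
  have "sin x \<noteq> 1"
  proof
    assume "sin x = 1"
    then obtain n :: int where n: "x = (2 * real_of_int n + 1/2) * pi" using sin_eq_1 by auto
    then have "pi/2 < (2 * real_of_int n + 1/2) * pi" "(2 * real_of_int n + 1/2) * pi < pi/2 + 2*pi" using assms by auto
    then have "0 < 2 * real_of_int n * pi" "2 * real_of_int n * pi < 2 * pi" by (auto simp: algebra_simps)
    then have "0 < real_of_int n" "real_of_int n < 1" by (auto simp: zero_less_mult_iff)
    then have "0 < n" "n < 1" by linarith+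
    then show False by simp
  qed
  then show ?thesis using sin_le_one[of x] by linarith
qed

lemma period_eq: assumes "0 < e" "e < 1" shows "period_T (sqrt 2 * e) = Tp e"
proof -
  have e: "\<bar>e\<bar> < 1" using assms by simp
  let ?A = "{T. T > 0 \<and> (\<forall>t. qs e (t + T) = qs e t)}"
  have inA: "Tp e \<in> ?A"
    using Tp_pos[OF e] th_shift[OF e] unfolding qs_def by simp
  have lb: "Tp e \<le> S" if "S \<in> ?A" for S
  proof (rule ccontr)
    assume "\<not> Tp e \<le> S"
    then have S: "0 < S" "S < Tp e" using that by auto
    define t0 where "t0 = Fa e (pi/2)"
    have th0: "th e t0 = pi/2" unfolding t0_def using th_Fa[OF e] .
    have thT: "th e (t0 + Tp e) = pi/2 + 2*pi" using th_shift[OF e] th0 by simp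
    define x where "x = th e (t0 + S)"
    have x: "pi/2 < x" "x < pi/2 + 2*pi"
      using th_mono[OF e, of t0 "t0 + S"] th_mono[OF e, of "t0 + S" "t0 + Tp e"] S th0 thT
      unfolding x_def by auto
    have sx: "sin x < 1" using sin_lt_1[OF x] .
    have "e * sin x < e" using sx assms by simp
    moreover have "-1 \<le> e * sin x" using abs_esin[OF e, of x] by simp
    ultimately have "HH (e * sin x) < HH e" using HH_mono[of "e * sin x" e] assms by simp
    moreover have "qs e (t0 + S) = qs e t0" using that by simp
    ultimately show False unfolding qs_def x_def[symmetric] th0 by simp
  qed
  have "min_period (qs e) = Tp e" unfolding min_period_def
    by (rule cInf_eq_minimum[OF inA lb])
  then show ?thesis unfolding period_T_def sol_q_eq[OF e] .
qed

lemma kf_mono_le: assumes "\<bar>e1\<bar> \<le> \<bar>e2\<bar>" "\<bar>e2\<bar> < 1" shows "kf e1 x \<le> kf e2 x"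
proof -
  have "\<bar>e1 * sin x\<bar> \<le> \<bar>e2 * sin x\<bar>" using assms by (simp add: abs_mult mult_right_mono)
  then have "kap (e1 * sin x) \<le> kap (e2 * sin x)" using kap_mono_le abs_esin[OF assms(2)] by blast
  then show ?thesis unfolding kf_def by (simp add: divide_right_mono)
qed

lemma Tp_mono: assumes "0 \<le> e1" "e1 < e2" "e2 < 1" shows "Tp e1 < Tp e2"
proof -
  have a1: "\<bar>e1\<bar> < 1" "\<bar>e2\<bar> < 1" using assms by auto
  define h where "h x = Fa e2 x - Fa e1 x" for x
  have dh: "(h has_real_derivative kf e2 x - kf e1 x) (at x)" for x
    unfolding h_def by (intro DERIV_diff Fa(1) a1)
  have nn: "0 \<le> kf e2 x - kf e1 x" for x using kf_mono_le[of e1 e2 x] assms by simp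
  have p1: "0 * (pi/4 - 0) \<le> h (pi/4) - h 0" by (rule deriv_ge[OF _ dh nn]) simp
  have p3: "0 * (2*pi - 3*pi/4) \<le> h (2*pi) - h (3*pi/4)" by (rule deriv_ge[OF _ dh nn]) simp
  have p2: "h (pi/4) < h (3*pi/4)"
  proof (rule DERIV_pos_imp_increasing[where f=h])
    show "pi/4 < 3*pi/4" by simp
    fix x assume x: "pi/4 \<le> x" "x \<le> 3*pi/4"
    have "0 < x" "x < pi" using x pi_gt_zero by linarith+
    then have "sin x > 0" by (intro sin_gt_zero)
    then have "\<bar>e1 * sin x\<bar> < \<bar>e2 * sin x\<bar>" using assms by (simp add: abs_mult)
    then have "kap (e1 * sin x) < kap (e2 * sin x)" using kap_mono abs_esin[OF a1(2)] by blast
    then have "kf e1 x < kf e2 x" unfolding kf_def by (simp add: divide_strict_right_mono)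
    then show "\<exists>y. (h has_real_derivative y) (at x) \<and> 0 < y" using dh[of x] by (intro exI[of _ "kf e2 x - kf e1 x"]) auto
  qed
  have "h 0 = 0" unfolding h_def using Fa(2) a1 by simp
  then have "h (2*pi) > 0" using p1 p2 p3 by simp
  then show ?thesis unfolding h_def Tp_def by simp
qed

lemma Tp_lower: assumes "\<bar>e\<bar> < 1" shows "pi / sqrt 2 \<le> Tp e"
proof -
  have "kf e x \<ge> 1 / (2 * sqrt 2)" for x
  proof -
    have "kap 0 \<le> kap (e * sin x)" using kap_mono_le[of 0 "e * sin x"] abs_esin[OF assms] by simp
    then show ?thesis unfolding kf_def kap_0 by (simp add: field_simps)
  qed
  then have "1 / (2 * sqrt 2) * (2 * pi - 0) \<le> Fa e (2*pi) - Fa e 0"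
    by (intro deriv_ge[OF _ Fa(1)[OF assms]]) auto
  then show ?thesis unfolding Tp_def using Fa(2)[OF assms] by (simp add: field_simps)
qed

lemma Tp_0: "Tp 0 = pi / sqrt 2"
proof -
  have k: "kf 0 x = 1 / (2 * sqrt 2)" for x unfolding kf_def by (simp add: kap_0)
  have "Fa 0 (2*pi) - Fa 0 0 \<le> 1 / (2 * sqrt 2) * (2 * pi - 0)"
    by (intro deriv_le[OF _ Fa(1)]) (auto simp: k)
  then have "Tp 0 \<le> pi / sqrt 2" unfolding Tp_def using Fa(2)[of 0] by (simp add: field_simps)
  then show ?thesis using Tp_lower[of 0] by simp
qed

lemma Tp_close: assumes "\<bar>e1\<bar> < 1" "\<bar>e2\<bar> < 1" "\<And>x. \<bar>kf e1 x - kf e2 x\<bar> \<le> c"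
  shows "\<bar>Tp e1 - Tp e2\<bar> \<le> 2 * pi * c"
proof -
  define h where "h x = Fa e1 x - Fa e2 x" for x
  have dh: "(h has_real_derivative kf e1 x - kf e2 x) (at x)" for x
    unfolding h_def by (intro DERIV_diff Fa(1) assms)
  have hi: "kf e1 x - kf e2 x \<le> c" for x using assms(3)[of x] by (simp add: abs_le_iff)
  have lo: "-c \<le> kf e1 x - kf e2 x" for x using assms(3)[of x] by (simp add: abs_le_iff)
  have "h (2*pi) - h 0 \<le> c * (2*pi - 0)" by (rule deriv_le[OF _ dh hi]) simp
  moreover have "(-c) * (2*pi - 0) \<le> h (2*pi) - h 0" by (rule deriv_ge[OF _ dh lo]) simp
  moreover have "h 0 = 0" unfolding h_def using Fa(2) assms by simp
  ultimately show ?thesis unfolding h_def Tp_def by (simp add: abs_le_iff algebra_simps)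
qed

lemma kap_unif: assumes "0 < b" "b < 1" "0 < \<epsilon>"
  shows "\<exists>\<delta>>0. \<forall>s s'. \<bar>s\<bar> \<le> b \<longrightarrow> \<bar>s'\<bar> \<le> b \<longrightarrow> \<bar>s - s'\<bar> < \<delta> \<longrightarrow> \<bar>kap s - kap s'\<bar> < \<epsilon>"
proof -
  have "continuous_on {-b..b} kap"
    by (intro continuous_at_imp_continuous_on ballI kap_cont) (use assms in auto)
  then have "uniformly_continuous_on {-b..b} kap"
    by (intro compact_uniformly_continuous) auto
  then obtain \<delta> where d: "\<delta> > 0" "\<forall>x\<in>{-b..b}. \<forall>x'\<in>{-b..b}. dist x' x < \<delta> \<longrightarrow> dist (kap x') (kap x) < \<epsilon>"
    unfolding uniformly_continuous_on_def using assms by metis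
  show ?thesis
  proof (intro exI[of _ \<delta>] conjI allI impI)
    fix s s' :: real assume "\<bar>s\<bar> \<le> b" "\<bar>s'\<bar> \<le> b" "\<bar>s - s'\<bar> < \<delta>"
    then show "\<bar>kap s - kap s'\<bar> < \<epsilon>" using d(2)[rule_format, of s' s] by (auto simp: dist_real_def abs_le_iff)
  qed (use d in auto)
qed

lemma Tp_cont: assumes "\<bar>e0\<bar> < 1" "0 < \<epsilon>"
  shows "\<exists>\<delta>>0. \<forall>e. \<bar>e - e0\<bar> < \<delta> \<longrightarrow> \<bar>Tp e - Tp e0\<bar> \<le> \<epsilon>"
proof -
  define b where "b = (1 + \<bar>e0\<bar>) / 2"
  have b: "0 < b" "b < 1" "\<bar>e0\<bar> < b" using assms unfolding b_def by auto
  have "\<epsilon> / (2 * pi) > 0" using assms by simp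
  from kap_unif[OF b(1,2) this] obtain \<delta>1 where d1: "\<delta>1 > 0"
    "\<And>s s'. \<bar>s\<bar> \<le> b \<Longrightarrow> \<bar>s'\<bar> \<le> b \<Longrightarrow> \<bar>s - s'\<bar> < \<delta>1 \<Longrightarrow> \<bar>kap s - kap s'\<bar> < \<epsilon> / (2 * pi)"
    by blast
  show ?thesis
  proof (intro exI[of _ "min \<delta>1 (b - \<bar>e0\<bar>)"] conjI allI impI)
    show "0 < min \<delta>1 (b - \<bar>e0\<bar>)" using d1 b by simp
    fix e assume e: "\<bar>e - e0\<bar> < min \<delta>1 (b - \<bar>e0\<bar>)"
    then have eb: "\<bar>e\<bar> < b" by auto
    have "\<bar>kf e x - kf e0 x\<bar> \<le> \<epsilon> / (2 * pi)" for x
    proof -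
      have sx: "\<bar>sin x\<bar> \<le> 1" by (rule abs_sin_le_one)
      have "\<bar>e * sin x\<bar> \<le> \<bar>e\<bar>" using sx by (simp add: abs_mult mult_left_le)
      then have s1: "\<bar>e * sin x\<bar> \<le> b" using eb by simp
      have "\<bar>e0 * sin x\<bar> \<le> \<bar>e0\<bar>" using sx by (simp add: abs_mult mult_left_le)
      then have s2: "\<bar>e0 * sin x\<bar> \<le> b" using b by simp
      have "\<bar>e * sin x - e0 * sin x\<bar> = \<bar>e - e0\<bar> * \<bar>sin x\<bar>" by (simp add: abs_mult left_diff_distrib[symmetric])
      also have "\<dots> \<le> \<bar>e - e0\<bar>" using sx by (simp add: mult_left_le)
      finally have "\<bar>e * sin x - e0 * sin x\<bar> < \<delta>1" using e by simp
      then have "\<bar>kap (e * sin x) - kap (e0 * sin x)\<bar> < \<epsilon> / (2 * pi)" using d1(2) s1 s2 by blast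
      moreover have "\<bar>kf e x - kf e0 x\<bar> = \<bar>kap (e * sin x) - kap (e0 * sin x)\<bar> / sqrt 2"
        unfolding kf_def by (simp add: diff_divide_distrib[symmetric])
      moreover have "\<bar>kap (e * sin x) - kap (e0 * sin x)\<bar> / sqrt 2 \<le> \<bar>kap (e * sin x) - kap (e0 * sin x)\<bar>"
      proof -
        have "1 / sqrt 2 \<le> (1::real)" by simp
        then have "\<bar>kap (e * sin x) - kap (e0 * sin x)\<bar> * (1 / sqrt 2) \<le> \<bar>kap (e * sin x) - kap (e0 * sin x)\<bar> * 1"
          by (intro mult_left_mono) auto
        then show ?thesis by simp
      qed
      ultimately show ?thesis by linarith
    qed
    then have "\<bar>Tp e - Tp e0\<bar> \<le> 2 * pi * (\<epsilon> / (2 * pi))" using Tp_close eb b assms by (meson less_trans)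
    then show "\<bar>Tp e - Tp e0\<bar> \<le> \<epsilon>" by simp
  qed
qed



lemma cos_lower: "1 - x\<^sup>2 / 2 \<le> cos (x::real)"
proof -
  have c: "cos x = 1 - 2 * (sin (x/2))\<^sup>2" using cos_double_sin[of "x/2"] by simp
  have "\<bar>sin (x/2)\<bar> \<le> \<bar>x/2\<bar>" by (rule abs_sin_x_le_abs_x)
  then have "\<bar>sin (x/2)\<bar>\<^sup>2 \<le> \<bar>x/2\<bar>\<^sup>2" by (rule power_mono) simp
  then have "(sin (x/2))\<^sup>2 \<le> x\<^sup>2 / 4" by (simp add: power_divide)
  then show ?thesis using c by simp
qed

lemma Tp_big: assumes M: "1 \<le> M" and e: "1 - 1 / (6912 * M^4) \<le> e" "e < 1"
  shows "M \<le> Tp e"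
proof -
  have M4: "M^4 \<ge> 1" using M by (simp add: one_le_power)
  have M6: "6912 * M^4 \<ge> 1" using M4 by simp
  have "1 / (6912 * M^4) \<le> 1" using M6 by (simp add: divide_le_eq)
  then have e0: "0 \<le> e" using e by linarith
  have ea: "\<bar>e\<bar> < 1" using e e0 by simp
  define \<sigma> where "\<sigma> = sqrt (1 - e)"
  have sp: "\<sigma> > 0" using e unfolding \<sigma>_def by simp
  have s2: "\<sigma>\<^sup>2 = 1 - e" unfolding \<sigma>_def using e by simp
  have s2b: "\<sigma>\<^sup>2 \<le> 1 / (6912 * M^4)" using s2 e by simp
  have "1 / (6912 * M^4) \<le> 1" using M6 by (simp add: divide_le_eq)
  then have s1: "\<sigma> \<le> 1" using s2b sp by (metis power2_le_imp_le order_trans one_power2 zero_le_one)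
  have key: "kf e x \<ge> M / (2 * \<sigma>)" if x: "pi/2 - \<sigma> \<le> x" "x \<le> pi/2 + \<sigma>" for x
  proof -
    have "(pi/2 - x)\<^sup>2 \<le> \<sigma>\<^sup>2" using x by (intro power2_le_iff_abs_le[THEN iffD2]) (use sp in auto)
    moreover have "sin x = cos (pi/2 - x)" by (simp add: cos_diff)
    ultimately have sx: "sin x \<ge> 1 - \<sigma>\<^sup>2 / 2" using cos_lower[of "pi/2 - x"] by simp
    define s where "s = e * sin x"
    have "\<sigma>\<^sup>2 \<le> 1" using s1 sp by (simp add: power_le_one)
    then have "sin x \<ge> 0" using sx by simp
    then have s0: "0 \<le> s" unfolding s_def using e0 by simp
    have sl: "s < 1" using abs_esin[OF ea, of x] unfolding s_def by simp
    have "e * (1 - \<sigma>\<^sup>2 / 2) \<le> s" unfolding s_def using sx e0 by (simp add: mult_left_mono)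
    then have "1 - s \<le> 1 - e + e * \<sigma>\<^sup>2 / 2" by (simp add: algebra_simps)
    also have "\<dots> \<le> \<sigma>\<^sup>2 + \<sigma>\<^sup>2 / 2" using s2 e by (simp add: mult_left_le_one_le)
    finally have oms: "1 - s \<le> 3 / 2 * \<sigma>\<^sup>2" by simp
    obtain y where y: "0 < y" "y \<le> 1" "y^4 \<le> 2 * (1 - s)" "kap s \<ge> 1 / (4 * y^3)"
      using kap_lower[OF s0 sl] by blast
    have y4: "y^4 \<le> 3 * \<sigma>\<^sup>2" using y(3) oms by simp
    have "(y^3)^4 = (y^4)^3" by (simp flip: power_mult)
    also have "\<dots> \<le> (3 * \<sigma>\<^sup>2)^3" using y4 y(1) by (intro power_mono) auto
    also have "\<dots> = 27 * \<sigma>\<^sup>2 * \<sigma>^4" by (simp add: power_mult_distrib flip: power_mult)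
    also have "\<dots> \<le> 27 * (1 / (6912 * M^4)) * \<sigma>^4" using s2b by (intro mult_right_mono) auto
    also have "\<dots> = (\<sigma> / (4 * M))^4" using M by (simp add: power_divide power_mult_distrib)
    finally have "(y^3)^4 \<le> (\<sigma> / (4 * M))^4" .
    moreover have "0 \<le> y^3" "0 \<le> \<sigma> / (4 * M)" using y sp M by auto
    ultimately have y3: "y^3 \<le> \<sigma> / (4 * M)" using power_mono_iff[of "y^3" "\<sigma> / (4 * M)" 4] by simp
    have y3p: "y^3 > 0" using y by simp
    have m4: "4 * M * y^3 \<le> \<sigma>" using y3 M by (simp add: le_divide_eq mult.commute)
    have "M / \<sigma> \<le> 1 / (4 * y^3)" 
    proof -
      have "M * (4 * y^3) \<le> 1 * \<sigma>" using m4 by (simp add: mult_ac)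
      then show ?thesis using y3p sp by (simp add: frac_le_eq divide_simps)
    qed
    then have ks: "M / \<sigma> \<le> kap s" using y(4) by linarith
    have "M / (2 * \<sigma>) \<le> (M / \<sigma>) / sqrt 2"
    proof -
      have "sqrt 2 \<le> 2" using sqrt2_less_2 by simp
      then show ?thesis using sp M by (simp add: field_simps)
    qed
    also have "\<dots> \<le> kap s / sqrt 2" using divide_right_mono[OF ks, of "sqrt 2"] by simp
    finally show ?thesis unfolding kf_def s_def .
  qed
  have "M / (2 * \<sigma>) * ((pi/2 + \<sigma>) - (pi/2 - \<sigma>)) \<le> Fa e (pi/2 + \<sigma>) - Fa e (pi/2 - \<sigma>)"
    by (rule deriv_ge_on[OF _ Fa(1)[OF ea] key]) (use sp in auto)
  then have m: "M \<le> Fa e (pi/2 + \<sigma>) - Fa e (pi/2 - \<sigma>)" using sp by simp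
  have "pi/2 - \<sigma> > 0" using s1 pi_gt3 by linarith
  then have a: "Fa e 0 < Fa e (pi/2 - \<sigma>)" using Fa_mono[OF ea] by blast
  have "pi/2 + \<sigma> < 2 * pi" using s1 pi_gt3 by linarith
  then have b: "Fa e (pi/2 + \<sigma>) < Fa e (2 * pi)" using Fa_mono[OF ea] by blast
  show ?thesis using m a b Fa(2)[OF ea] unfolding Tp_def by linarith
qed



lemma pT: assumes "0 < po" "po < sqrt 2" shows "period_T po = Tp (po / sqrt 2)"
proof -
  have "0 < po / sqrt 2" "po / sqrt 2 < 1" using assms by (auto simp: field_simps)
  from period_eq[OF this] show ?thesis by simp
qed

theorem lemma5p14:
  shows "continuous_on {0<..<sqrt 2} period_T
    \<and> strict_mono_on {0<..<sqrt 2} period_T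
    \<and> (INF po\<in>{0<..<sqrt 2}. period_T po) = pi / sqrt 2
    \<and> filterlim period_T at_top (at_left (sqrt 2))"
proof (intro conjI)
  have s2: "sqrt 2 > (0::real)" by simp
  show "continuous_on {0<..<sqrt 2} period_T"
  proof (intro continuous_at_imp_continuous_on ballI)
    fix po assume po: "po \<in> {0<..<sqrt 2}"
    show "isCont period_T po" unfolding continuous_at_eps_delta
    proof (intro allI impI)
      fix \<epsilon> :: real assume "\<epsilon> > 0"
      then have "\<epsilon> / 2 > 0" by simp
      have e0: "\<bar>po / sqrt 2\<bar> < 1" using po by (auto simp: field_simps)
      from Tp_cont[OF e0 \<open>\<epsilon>/2 > 0\<close>] obtain \<delta>1 where d1: "\<delta>1 > 0"
        "\<And>e. \<bar>e - po / sqrt 2\<bar> < \<delta>1 \<Longrightarrow> \<bar>Tp e - Tp (po / sqrt 2)\<bar> \<le> \<epsilon> / 2" by blast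
      define \<delta> where "\<delta> = min (sqrt 2 * \<delta>1) (min po (sqrt 2 - po))"
      show "\<exists>\<delta>>0. \<forall>x'. dist x' po < \<delta> \<longrightarrow> dist (period_T x') (period_T po) < \<epsilon>"
      proof (intro exI[of _ \<delta>] conjI allI impI)
        show "\<delta> > 0" unfolding \<delta>_def using po d1 by auto
        fix x' assume "dist x' po < \<delta>"
        then have x': "\<bar>x' - po\<bar> < \<delta>" by (simp add: dist_real_def)
        then have x'i: "0 < x'" "x' < sqrt 2" unfolding \<delta>_def by auto
        have "\<bar>x' / sqrt 2 - po / sqrt 2\<bar> = \<bar>x' - po\<bar> / sqrt 2" by (simp add: diff_divide_distrib[symmetric])
        also have "\<dots> < \<delta>1" using x' unfolding \<delta>_def by (simp add: divide_less_eq mult.commute)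
        finally have "\<bar>Tp (x' / sqrt 2) - Tp (po / sqrt 2)\<bar> \<le> \<epsilon> / 2" using d1(2) by blast
        then show "dist (period_T x') (period_T po) < \<epsilon>"
          using pT[OF x'i] pT po \<open>\<epsilon> > 0\<close> by (simp add: dist_real_def)
      qed
    qed
  qed
  show "strict_mono_on {0<..<sqrt 2} period_T"
  proof (rule strict_mono_onI)
    fix r s assume rs: "r \<in> {0<..<sqrt 2}" "s \<in> {0<..<sqrt 2}" "r < s"
    have "Tp (r / sqrt 2) < Tp (s / sqrt 2)"
      by (rule Tp_mono) (use rs in \<open>auto simp: field_simps\<close>)
    then show "period_T r < period_T s" using pT rs by simp
  qed
  show "(INF po\<in>{0<..<sqrt 2}. period_T po) = pi / sqrt 2"
  proof (rule antisym)
    have lb: "pi / sqrt 2 \<le> period_T po" if "po \<in> {0<..<sqrt 2}" for po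
      using pT Tp_lower[of "po / sqrt 2"] that by (auto simp: field_simps)
    show "pi / sqrt 2 \<le> (INF po\<in>{0<..<sqrt 2}. period_T po)"
      by (rule cINF_greatest) (use lb s2 in auto)
    show "(INF po\<in>{0<..<sqrt 2}. period_T po) \<le> pi / sqrt 2"
    proof (rule field_le_epsilon)
      fix \<epsilon> :: real assume "\<epsilon> > 0"
      from Tp_cont[of 0 \<epsilon>] \<open>\<epsilon> > 0\<close> obtain \<delta> where d: "\<delta> > 0"
        "\<And>e. \<bar>e - 0\<bar> < \<delta> \<Longrightarrow> \<bar>Tp e - Tp 0\<bar> \<le> \<epsilon>" by auto
      define e where "e = min (\<delta> / 2) (1/2)"
      have e: "0 < e" "e < 1" "\<bar>e - 0\<bar> < \<delta>" unfolding e_def using d by auto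
      have "Tp e \<le> pi / sqrt 2 + \<epsilon>" using d(2)[OF e(3)] Tp_0 by simp
      moreover have "period_T (sqrt 2 * e) = Tp e" using period_eq e by simp
      moreover have "sqrt 2 * e \<in> {0<..<sqrt 2}" using e by auto
      moreover have "bdd_below (period_T ` {0<..<sqrt 2})" using lb by (auto intro!: bdd_belowI2[where m="pi / sqrt 2"])
      ultimately show "(INF po\<in>{0<..<sqrt 2}. period_T po) \<le> pi / sqrt 2 + \<epsilon>"
        by (metis cINF_lower order_trans)
    qed
  qed
  show "filterlim period_T at_top (at_left (sqrt 2))"
    unfolding filterlim_at_top eventually_at_left_field
  proof
    fix Z :: real
    define M where "M = max Z 1"
    have M: "1 \<le> M" "Z \<le> M" unfolding M_def by auto
    define b where "b = max 0 (sqrt 2 * (1 - 1 / (6912 * M^4)))"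
    have "M^4 \<ge> 1" using M by (simp add: one_le_power)
    then have M6: "6912 * M^4 \<ge> 1" by simp
    then have pos: "1 / (6912 * M^4) > 0" using M by simp
    have "b < sqrt 2" unfolding b_def using pos by auto
    moreover have "Z \<le> period_T y" if "b < y" "y < sqrt 2" for y
    proof -
      have y0: "0 < y" using that unfolding b_def by auto
      have "sqrt 2 * (1 - 1 / (6912 * M^4)) < y" using that unfolding b_def by auto
      then have "1 - 1 / (6912 * M^4) \<le> y / sqrt 2" by (simp add: field_simps)
      moreover have "y / sqrt 2 < 1" using that by (simp add: field_simps)
      ultimately have "M \<le> Tp (y / sqrt 2)" using Tp_big M by blast
      then show ?thesis using pT[OF y0 that(2)] M by simp
    qed
    ultimately show "\<exists>b<sqrt 2. \<forall>y>b. y < sqrt 2 \<longrightarrow> Z \<le> period_T y" by blast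
  qed
qed

end
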